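(* Let $\mathbb{T}$ be a time scale, $T>0$ with $0,T\in\mathbb{T}$, $J=[0,T]_{\mathbb{T}}$, $0<t_1<\dots<t_p<T$ right-dense points of $J$, $\lambda\in\mathbb{R}$, $h\in L^2_\Delta([0,T)_{\mathbb{T}})$ and $d_1,\dots,d_p\in\mathbb{R}$. Define $\varphi:H^1_{0,\Delta}(J)\to\mathbb{R}$ by $$\varphi(v)=\frac12\int_0^T (v^\Delta)^2\Delta t+\frac{\lambda}{2}\int_0^T (v^\sigma)^2\Delta t-\int_0^T h v^\sigma\Delta t+\sum_{j=1}^p d_j v(t_j).$$ Then: (1) $\varphi$ is differentiable at every $u\in H^1_{0,\Delta}(J)$ and for all $v\in H^1_{0,\Delta}(J)$, $$(\varphi'(u),v)=\int_0^T u^\Delta v^\Delta\Delta t+\lambda\int_0^T u^\sigma v^\sigma\Delta t-\int_0^T h v^\sigma\Delta t+\sum_{j=1}^p d_j v(t_j);$$ (2) if $u\in H^1_{0,\Delta}(J)$ is a critical point of $\varphi$, then $u$ is a weak solution of $$-u^{\Delta\Delta}(t)+\lambda u^\sigma(t)=h(t)\ \ \Delta\text{-a.e. } t\in J^{\kappa^2},\quad u^\Delta(t_j^+)-u^\Delta(t_j^-)=d_j,\ j=1,\dots,p,\quad u(0)=u(T)=0.$$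
   Context: $\sigma$ is the forward jump operator and $v^\sigma=v\circ\sigma$; $v^\Delta$ is the delta derivative; $J^{\kappa}$, $J^{\kappa^2}$ denote $J$ with a left-scattered maximum removed once, resp. twice. $H^1_{0,\Delta}(J)$ is the closure in $W^{1,2}_\Delta(J)$ of the continuous functions on $J$ that are delta differentiable on $J^\kappa$ with rd-continuous derivative and vanish at $0,T$, with inner product $(u,v)=\int_0^T u^\Delta v^\Delta\Delta t$. A weak solution of the linear problem is $u\in H^1_{0,\Delta}(J)$ such that $\int_0^T u^\Delta v^\Delta\Delta t+\lambda\int_0^T u^\sigma v^\sigma\Delta t=\int_0^T h v^\sigma\Delta t-\sum_{j=1}^p d_j v(t_j)$ for every $v\in H^1_{0,\Delta}(J)$. *)

theory Defs
  imports "HOL-Analysis.Analysis"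
begin

definition time_scale :: "real set \<Rightarrow> bool" where
  "time_scale TS \<longleftrightarrow> closed TS \<and> TS \<noteq> {}"

definition sigma_ts :: "real set \<Rightarrow> real \<Rightarrow> real" where
  "sigma_ts TS t = (if \<exists>s\<in>TS. s > t then Inf {s\<in>TS. s > t} else t)"

definition right_dense :: "real set \<Rightarrow> real \<Rightarrow> bool" where
  "right_dense TS t \<longleftrightarrow> t \<in> TS \<and> sigma_ts TS t = t"

definition ts_floor :: "real set \<Rightarrow> real \<Rightarrow> real" where
  "ts_floor TS s = Sup {t\<in>TS. t \<le> s}"

text \<open>Lebesgue Delta-measure on [a,b) of the time scale (a, b in TS): the completion of
  the image of Lebesgue measure on [a,b) under ts_floor; it gives the interval [c,d) of the
  time scale (c,d in TS) the mass d - c, i.e. it is the Caratheodory extension of the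
  Delta-premeasure.\<close>
definition delta_measure :: "real set \<Rightarrow> real \<Rightarrow> real \<Rightarrow> real measure" where
  "delta_measure TS a b = completion (distr (restrict_space lborel {a..<b}) borel (ts_floor TS))"

definition delta_int :: "real set \<Rightarrow> real \<Rightarrow> real \<Rightarrow> (real \<Rightarrow> real) \<Rightarrow> real" where
  "delta_int TS a b f = integral\<^sup>L (delta_measure TS a b) f"

definition L2_delta :: "real set \<Rightarrow> real \<Rightarrow> real \<Rightarrow> (real \<Rightarrow> real) \<Rightarrow> bool" where
  "L2_delta TS a b f \<longleftrightarrow> f \<in> borel_measurable (delta_measure TS a b)
      \<and> integrable (delta_measure TS a b) (\<lambda>t. (f t)\<^sup>2)"

definition is_delta_deriv :: "real set \<Rightarrow> real \<Rightarrow> (real \<Rightarrow> real) \<Rightarrow> (real \<Rightarrow> real) \<Rightarrow> bool" where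
  "is_delta_deriv TS T u g \<longleftrightarrow> L2_delta TS 0 T g \<and>
      (\<forall>t\<in>TS \<inter> {0..T}. u t = u 0 + delta_int TS 0 t g)"

text \<open>H^1_{0,Delta}(J), via the absolutely continuous representatives.\<close>
definition H10 :: "real set \<Rightarrow> real \<Rightarrow> (real \<Rightarrow> real) set" where
  "H10 TS T = {u. (\<exists>g. is_delta_deriv TS T u g) \<and> u 0 = 0 \<and> u T = 0}"

definition dderiv :: "real set \<Rightarrow> real \<Rightarrow> (real \<Rightarrow> real) \<Rightarrow> (real \<Rightarrow> real)" where
  "dderiv TS T u = (SOME g. is_delta_deriv TS T u g)"

definition H_norm :: "real set \<Rightarrow> real \<Rightarrow> (real \<Rightarrow> real) \<Rightarrow> real" where
  "H_norm TS T u = sqrt (delta_int TS 0 T (\<lambda>t. (dderiv TS T u t)\<^sup>2))"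

definition frechet_diff_at ::
  "(real \<Rightarrow> real) set \<Rightarrow> ((real \<Rightarrow> real) \<Rightarrow> real) \<Rightarrow> ((real \<Rightarrow> real) \<Rightarrow> real)
     \<Rightarrow> (real \<Rightarrow> real) \<Rightarrow> ((real \<Rightarrow> real) \<Rightarrow> real) \<Rightarrow> bool" where
  "frechet_diff_at H nrm F u L \<longleftrightarrow>
     (\<forall>v\<in>H. \<forall>w\<in>H. \<forall>a b. L (\<lambda>t. a * v t + b * w t) = a * L v + b * L w) \<and>
     (\<exists>C. \<forall>v\<in>H. \<bar>L v\<bar> \<le> C * nrm v) \<and>
     (\<forall>\<epsilon>>0. \<exists>\<delta>>0. \<forall>v\<in>H. nrm (\<lambda>t. v t - u t) < \<delta> \<longrightarrow>
        \<bar>F v - F u - L (\<lambda>t. v t - u t)\<bar> \<le> \<epsilon> * nrm (\<lambda>t. v t - u t))"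

definition critical_point ::
  "(real \<Rightarrow> real) set \<Rightarrow> ((real \<Rightarrow> real) \<Rightarrow> real) \<Rightarrow> ((real \<Rightarrow> real) \<Rightarrow> real)
     \<Rightarrow> (real \<Rightarrow> real) \<Rightarrow> bool" where
  "critical_point H nrm F u \<longleftrightarrow> u \<in> H \<and> (\<exists>L. frechet_diff_at H nrm F u L \<and> (\<forall>v\<in>H. L v = 0))"

definition weak_solution ::
  "real set \<Rightarrow> real \<Rightarrow> real \<Rightarrow> (real \<Rightarrow> real) \<Rightarrow> nat \<Rightarrow> (nat \<Rightarrow> real) \<Rightarrow> (nat \<Rightarrow> real)
     \<Rightarrow> (real \<Rightarrow> real) \<Rightarrow> bool" where
  "weak_solution TS T lam h p tt d u \<longleftrightarrow> u \<in> H10 TS T \<and>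
     (\<forall>v\<in>H10 TS T.
        delta_int TS 0 T (\<lambda>t. dderiv TS T u t * dderiv TS T v t)
        + lam * delta_int TS 0 T (\<lambda>t. u (sigma_ts TS t) * v (sigma_ts TS t))
        = delta_int TS 0 T (\<lambda>t. h t * v (sigma_ts TS t)) - (\<Sum>j=1..p. d j * v (tt j)))"

end

theory Submission
  imports Defs
begin

locale tss =
  fixes TS :: "real set" and T :: real
  assumes clTS: "closed TS" and Tpos: "0 < T" and in0: "0 \<in> TS" and inT: "T \<in> TS"
begin

abbreviation "phi \<equiv> ts_floor TS"
abbreviation "sig \<equiv> sigma_ts TS"
definition "N0 c = distr (restrict_space lborel {0..<c}) borel phi"

lemma phi_props:
  assumes "0 \<le> s"
  shows "phi s \<in> TS" "phi s \<le> s" "0 \<le> phi s" "\<And>t. t \<in> TS \<Longrightarrow> t \<le> s \<Longrightarrow> t \<le> phi s"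
proof -
  let ?S = "{t\<in>TS. t \<le> s}"
  have ne: "?S \<noteq> {}" using in0 assms by auto
  have bd: "bdd_above ?S" by (auto intro: bdd_aboveI[of _ s])
  have cl: "closed ?S" using clTS by (simp add: closed_Collect_conj closed_Collect_le)
  have "Sup ?S \<in> ?S" using closed_contains_Sup[OF ne bd cl] .
  then show "phi s \<in> TS" "phi s \<le> s" by (auto simp: ts_floor_def)
  show "\<And>t. t \<in> TS \<Longrightarrow> t \<le> s \<Longrightarrow> t \<le> phi s"
    unfolding ts_floor_def using bd by (auto intro: cSup_upper)
  then show "0 \<le> phi s" using in0 assms by auto
qed

lemma phi_mono: "mono_on {0..} phi"
  by (rule mono_onI) (metis atLeast_iff order_trans phi_props(1,2,4))

lemma phi_meas: "phi \<in> restrict_space lborel {0..<c} \<rightarrow>\<^sub>M borel"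
proof -
  have "phi \<in> borel_measurable (restrict_space borel {0..<c})"
    by (rule borel_measurable_mono_on_fnc) (rule mono_on_subset[OF phi_mono], auto)
  moreover have "sets (restrict_space lborel {0..<c}) = sets (restrict_space borel {0..<c})"
    by (rule sets_restrict_space_cong) simp
  ultimately show ?thesis using measurable_cong_sets by blast
qed

lemma sig_props:
  assumes "t < T"
  shows "sig t \<in> TS" "t \<le> sig t" "sig t \<le> T"
proof -
  let ?S = "{s\<in>TS. s > t}"
  have ex: "\<exists>s\<in>TS. s > t" using inT assms by auto
  have ne: "?S \<noteq> {}" using ex by auto
  have bd: "bdd_below ?S" by (auto intro: bdd_belowI[of _ t])
  have "Inf ?S \<in> closure ?S" by (rule closure_contains_Inf[OF ne bd])
  also have "closure ?S \<subseteq> closure TS" by (rule closure_mono) auto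
  finally show "sig t \<in> TS" using ex clTS by (simp add: sigma_ts_def closure_closed)
  show "t \<le> sig t" using ex ne by (auto simp: sigma_ts_def intro!: cInf_greatest)
  show "sig t \<le> T" using ex bd inT assms by (auto simp: sigma_ts_def intro!: cInf_lower)
qed

lemma sig_mono: "mono sig"
proof (rule monoI)
  fix x y :: real assume "x \<le> y"
  show "sig x \<le> sig y"
  proof (cases "\<exists>s\<in>TS. s > y")
    case True
    then have ex: "\<exists>s\<in>TS. s > x" using \<open>x \<le> y\<close> by force
    have "Inf {s\<in>TS. s > x} \<le> Inf {s\<in>TS. s > y}"
      using True \<open>x \<le> y\<close> by (intro cInf_superset_mono) (auto intro: bdd_belowI[of _ x])
    then show ?thesis using True ex by (simp add: sigma_ts_def)
  next
    case False
    show ?thesis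
    proof (cases "\<exists>s\<in>TS. s > x")
      case True
      then obtain s where s: "s \<in> TS" "s > x" by auto
      have "Inf {s\<in>TS. s > x} \<le> s" using s by (intro cInf_lower) (auto intro: bdd_belowI[of _ x])
      also have "s \<le> y" using False s by force
      finally show ?thesis using True False by (simp add: sigma_ts_def)
    qed (use False \<open>x \<le> y\<close> in \<open>simp add: sigma_ts_def\<close>)
  qed
qed

lemma sig_meas: "sig \<in> borel_measurable borel"
  by (rule borel_measurable_mono[OF sig_mono])

lemma sets_N0[simp]: "sets (N0 c) = sets borel" and space_N0[simp]: "space (N0 c) = UNIV"
  by (simp_all add: N0_def)

lemma emeasure_N0: "A \<in> sets borel \<Longrightarrow> emeasure (N0 c) A = emeasure lborel (phi -` A \<inter> {0..<c})"
  unfolding N0_def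
  by (subst emeasure_distr[OF phi_meas], simp, subst emeasure_restrict_space) auto

lemma AE_N0_range: assumes "0 \<le> c" "c \<le> T" shows "AE x in N0 c. x \<in> TS \<and> 0 \<le> x \<and> x < T"
proof -
  have m: "{x \<in> space borel. x \<in> TS \<and> 0 \<le> x \<and> x < T} \<in> sets borel"
  proof -
    have "{x \<in> space borel. x \<in> TS \<and> 0 \<le> x \<and> x < T} = TS \<inter> {0..<T}" by auto
    moreover have "TS \<in> sets borel" using clTS by (rule borel_closed)
    ultimately show ?thesis by simp
  qed
  have pt: "phi s \<in> TS \<and> 0 \<le> phi s \<and> phi s < T" if "s \<in> {0..<c}" for s
  proof -
    have "0 \<le> s" "s < T" using that assms by auto
    then show ?thesis using phi_props[of s] by linarith
  qed
  show ?thesis unfolding N0_def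
    apply (subst AE_distr_iff[OF phi_meas m])
    apply (subst AE_restrict_space_iff)
     apply simp
    apply (rule AE_I2)
    using pt by blast
qed

lemma dm_eq: "delta_measure TS 0 c = completion (N0 c)"
  by (simp add: delta_measure_def N0_def)

lemma N0_null_mono:
  assumes "c \<le> c'" "B \<in> null_sets (N0 c')" shows "B \<in> null_sets (N0 c)"
proof -
  have B: "B \<in> sets borel" using assms(2) by (auto simp: null_sets_def)
  have "emeasure (N0 c) B = emeasure lborel (phi -` B \<inter> {0..<c})" using B by (rule emeasure_N0)
  also have "\<dots> \<le> emeasure lborel (phi -` B \<inter> {0..<c'})"
  proof (rule emeasure_mono)
    show "phi -` B \<inter> {0..<c'} \<in> sets lborel"
      using measurable_sets[OF phi_meas[of c'] B] by (simp add: sets_restrict_space_iff)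
  qed (use assms(1) in auto)
  also have "\<dots> = 0" using assms(2) B by (simp add: emeasure_N0 null_sets_def)
  finally show ?thesis using B by (auto simp: null_sets_def)
qed

lemma AE_N0_mono: "c \<le> c' \<Longrightarrow> AE x in N0 c'. P x \<Longrightarrow> AE x in N0 c. P x"
proof -
  assume c: "c \<le> c'" and "AE x in N0 c'. P x"
  then obtain B where "B \<in> null_sets (N0 c')" "{x \<in> space (N0 c'). \<not> P x} \<subseteq> B"
    unfolding eventually_ae_filter by blast
  then show ?thesis unfolding eventually_ae_filter
    using N0_null_mono[OF c] by (intro bexI[of _ B]) auto
qed

lemma meas_completion_AE:
  fixes f G :: "'a \<Rightarrow> real"
  assumes G: "G \<in> borel_measurable M" and ae: "AE x in M. f x = G x"
  shows "f \<in> borel_measurable (completion M)"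
proof (rule measurableI)
  fix A :: "real set" assume A: "A \<in> sets borel"
  have s: "G -` A \<inter> space M \<in> sets (completion M)" using measurable_sets[OF G A] by auto
  have "AE x in completion M. x \<in> G -` A \<inter> space M \<longleftrightarrow> x \<in> f -` A \<inter> space (completion M)"
    using AE_completion[OF ae] by eventually_elim auto
  then show "f -` A \<inter> space (completion M) \<in> sets (completion M)"
    by (rule completion.in_sets_AE[OF _ s]) auto
qed auto

lemma rep_ex:
  fixes f :: "real \<Rightarrow> real"
  assumes "f \<in> borel_measurable (completion (N0 c))"
  shows "\<exists>G. G \<in> borel_measurable borel \<and> (AE x in N0 c. f x = G x)"
proof -
  obtain G where "G \<in> borel_measurable (N0 c)" "AE x in N0 c. f x = G x"
    using completion_ex_borel_measurable_real[OF assms] by blast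
  moreover have "G \<in> borel_measurable borel"
    using calculation(1) measurable_cong_sets[OF sets_N0 refl] by blast
  ultimately show ?thesis by blast
qed

lemma int_rep:
  fixes f G :: "real \<Rightarrow> real"
  assumes G: "G \<in> borel_measurable borel" and ae: "AE x in N0 c. f x = G x"
    and int: "integrable lborel (\<lambda>s. indicator {0..<c} s * G (phi s))"
  shows "integrable (delta_measure TS 0 c) f"
    "delta_int TS 0 c f = (\<integral>s. indicator {0..<c} s * G (phi s) \<partial>lborel)"
proof -
  have Gm: "G \<in> borel_measurable (N0 c)" using G measurable_cong_sets[OF sets_N0 refl] by blast
  have fm: "f \<in> borel_measurable (completion (N0 c))" by (rule meas_completion_AE[OF Gm ae])
  have Gmc: "G \<in> borel_measurable (completion (N0 c))" using Gm by (rule measurable_completion)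
  have aec: "AE x in completion (N0 c). f x = G x" using AE_completion[OF ae] .
  have i1: "integrable (restrict_space lborel {0..<c}) (\<lambda>x. G (phi x))"
    using int by (subst integrable_restrict_space) auto
  have i2: "integrable (N0 c) G" unfolding N0_def
    using i1 by (subst integrable_distr_eq[OF phi_meas]) (use G in auto)
  have i3: "integrable (completion (N0 c)) G" using i2 Gm by (simp add: integrable_completion)
  show "integrable (delta_measure TS 0 c) f"
    unfolding dm_eq using integrable_cong_AE[OF fm Gmc aec] i3 by simp
  have "delta_int TS 0 c f = integral\<^sup>L (completion (N0 c)) G"
    unfolding delta_int_def dm_eq by (rule integral_cong_AE[OF fm Gmc aec])
  also have "\<dots> = integral\<^sup>L (N0 c) G" using Gm by (rule integral_completion)
  also have "\<dots> = integral\<^sup>L (restrict_space lborel {0..<c}) (\<lambda>x. G (phi x))"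
    unfolding N0_def using G by (subst integral_distr[OF phi_meas]) auto
  also have "\<dots> = (\<integral>s. indicator {0..<c} s * G (phi s) \<partial>lborel)"
    by (subst integral_restrict_space) auto
  finally show "delta_int TS 0 c f = (\<integral>s. indicator {0..<c} s * G (phi s) \<partial>lborel)" .
qed

lemma int_rep_back:
  fixes f G :: "real \<Rightarrow> real"
  assumes G: "G \<in> borel_measurable borel" and ae: "AE x in N0 c. f x = G x"
    and int: "integrable (delta_measure TS 0 c) f"
  shows "integrable lborel (\<lambda>s. indicator {0..<c} s * G (phi s))"
proof -
  have Gm: "G \<in> borel_measurable (N0 c)" using G measurable_cong_sets[OF sets_N0 refl] by blast
  have fm: "f \<in> borel_measurable (completion (N0 c))" by (rule meas_completion_AE[OF Gm ae])
  have Gmc: "G \<in> borel_measurable (completion (N0 c))" using Gm by (rule measurable_completion)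
  have aec: "AE x in completion (N0 c). f x = G x" using AE_completion[OF ae] .
  have "integrable (completion (N0 c)) G" using integrable_cong_AE[OF fm Gmc aec] int dm_eq by simp
  then have "integrable (N0 c) G" using Gm by (simp add: integrable_completion)
  then have "integrable (restrict_space lborel {0..<c}) (\<lambda>x. G (phi x))"
    unfolding N0_def using G by (subst (asm) integrable_distr_eq[OF phi_meas]) auto
  then show ?thesis by (subst (asm) integrable_restrict_space) auto
qed

lemma meas_ind:
  fixes G :: "real \<Rightarrow> real"
  assumes G: "G \<in> borel_measurable borel"
  shows "(\<lambda>s. indicator {0..<c} s * G (phi s) :: real) \<in> borel_measurable lborel"
proof -
  have "(\<lambda>s. G (phi s)) \<in> borel_measurable (restrict_space lborel {0..<c})"
    using measurable_compose[OF phi_meas G] .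
  then have "(\<lambda>s. indicator {0..<c} s *\<^sub>R G (phi s)) \<in> borel_measurable lborel"
    by (subst (asm) borel_measurable_restrict_space_iff) auto
  then show ?thesis by simp
qed

lemma int_sub:
  fixes G :: "real \<Rightarrow> real"
  assumes G: "G \<in> borel_measurable borel" and c: "c \<le> T"
    and int: "integrable lborel (\<lambda>s. indicator {0..<T} s * G (phi s))"
  shows "integrable lborel (\<lambda>s. indicator {0..<c} s * G (phi s))"
proof (rule Bochner_Integration.integrable_bound[OF int meas_ind[OF G]])
  show "AE x in lborel. norm (indicator {0..<c} x * G (phi x)) \<le> norm (indicator {0..<T} x * G (phi x))"
    using c by (intro AE_I2) (auto simp: indicator_def)
qed

lemma finite_N0: "finite_measure (N0 c)"
proof (rule finite_measureI)
  have "emeasure (N0 c) (space (N0 c)) = emeasure lborel (phi -` UNIV \<inter> {0..<c})"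
    by (simp add: emeasure_N0)
  also have "\<dots> = emeasure lborel {0..<c}" by simp
  finally show "emeasure (N0 c) (space (N0 c)) \<noteq> \<infinity>" by (cases "0 \<le> c") auto
qed

lemma N0_integral:
  fixes G :: "real \<Rightarrow> real"
  assumes G: "G \<in> borel_measurable borel"
  shows "integral\<^sup>L (N0 c) G = (\<integral>s. indicator {0..<c} s * G (phi s) \<partial>lborel)"
    and "integrable (N0 c) G \<longleftrightarrow> integrable lborel (\<lambda>s. indicator {0..<c} s * G (phi s))"
proof -
  show "integral\<^sup>L (N0 c) G = (\<integral>s. indicator {0..<c} s * G (phi s) \<partial>lborel)"
  proof -
    have "integral\<^sup>L (N0 c) G = integral\<^sup>L (restrict_space lborel {0..<c}) (\<lambda>x. G (phi x))"
      unfolding N0_def using G by (subst integral_distr[OF phi_meas]) auto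
    also have "\<dots> = (\<integral>s. indicator {0..<c} s * G (phi s) \<partial>lborel)"
      by (subst integral_restrict_space) auto
    finally show ?thesis .
  qed
  show "integrable (N0 c) G \<longleftrightarrow> integrable lborel (\<lambda>s. indicator {0..<c} s * G (phi s))"
  proof -
    have "integrable (N0 c) G \<longleftrightarrow> integrable (restrict_space lborel {0..<c}) (\<lambda>x. G (phi x))"
      unfolding N0_def using G by (subst integrable_distr_eq[OF phi_meas]) auto
    also have "\<dots> \<longleftrightarrow> integrable lborel (\<lambda>s. indicator {0..<c} s * G (phi s))"
      by (subst integrable_restrict_space) auto
    finally show ?thesis .
  qed
qed

lemma phi_gt_iff:
  assumes "x < T" "0 \<le> s" "s \<noteq> sig x"
  shows "x < phi s \<longleftrightarrow> sig x \<le> s"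
proof -
  let ?S = "{t\<in>TS. t > x}"
  have ex: "\<exists>t\<in>TS. t > x" using inT assms by auto
  have sg: "sig x = Inf ?S" using ex by (simp add: sigma_ts_def)
  have bd: "bdd_below ?S" by (auto intro: bdd_belowI[of _ x])
  show ?thesis
  proof
    assume "x < phi s"
    then have "phi s \<in> ?S" using phi_props(1)[OF assms(2)] by auto
    then have "sig x \<le> phi s" unfolding sg using bd by (rule cInf_lower)
    then show "sig x \<le> s" using phi_props(2)[OF assms(2)] by linarith
  next
    assume "sig x \<le> s"
    then have "Inf ?S < s" using assms(3) sg by auto
    then obtain t where t: "t \<in> ?S" "t < s" using cInf_less_iff[OF _ bd] ex by auto
    then have "t \<le> phi s" using phi_props(4)[OF assms(2)] by auto
    then show "x < phi s" using t by auto
  qed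
qed

lemma uniq0:
  fixes G :: "real \<Rightarrow> real"
  assumes G: "G \<in> borel_measurable borel"
    and int: "integrable lborel (\<lambda>s. indicator {0..<T} s * G (phi s))"
    and Z: "\<And>c. c \<in> TS \<Longrightarrow> 0 \<le> c \<Longrightarrow> c \<le> T \<Longrightarrow> (\<integral>s. indicator {0..<c} s * G (phi s) \<partial>lborel) = 0"
  shows "AE x in N0 T. G x = 0"
proof -
  interpret F: finite_measure "N0 T" by (rule finite_N0)
  have Gm[measurable]: "G \<in> borel_measurable (N0 T)" using G measurable_cong_sets[OF sets_N0 refl] by blast
  have Z': "(\<integral>s. indicator {0..<c} s * G (phi s) \<partial>lborel) = 0" if "c \<in> TS" "c \<le> T" for c
  proof (cases "0 \<le> c")
    case True then show ?thesis using Z that by auto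
  next
    case False then have "\<And>s. indicator {0..<c} s = (0::real)" by (auto simp: indicator_def)
    then show ?thesis by simp
  qed
  have iG: "integrable (N0 T) G" using N0_integral(2)[OF G] int by simp
  have K: "integral\<^sup>L (N0 T) (\<lambda>y. indicator {x<..} y * G y) = 0" for x
  proof -
    define c where "c = (if x < T then sig x else T)"
    have cT: "c \<in> TS" "c \<le> T" using sig_props inT by (auto simp: c_def)
    have Gi: "(\<lambda>y. indicator {x<..} y * G y) \<in> borel_measurable borel" using G by measurable
    have "integral\<^sup>L (N0 T) (\<lambda>y. indicator {x<..} y * G y)
        = (\<integral>s. indicator {0..<T} s * (indicator {x<..} (phi s) * G (phi s)) \<partial>lborel)"
      by (rule N0_integral(1)[OF Gi])
    also have "\<dots> = (\<integral>s. indicator {0..<T} s * G (phi s) - indicator {0..<c} s * G (phi s) \<partial>lborel)"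
    proof (rule integral_cong_AE)
      show "(\<lambda>s. indicator {0..<T} s * (indicator {x<..} (phi s) * G (phi s))) \<in> borel_measurable lborel"
        using meas_ind[OF Gi] by simp
      show "(\<lambda>s. indicator {0..<T} s * G (phi s) - indicator {0..<c} s * G (phi s)) \<in> borel_measurable lborel"
        using meas_ind[OF G] by measurable
      show "AE s in lborel. indicator {0..<T} s * (indicator {x<..} (phi s) * G (phi s)) =
          indicator {0..<T} s * G (phi s) - indicator {0..<c} s * G (phi s)"
        using AE_lborel_singleton[of c]
      proof eventually_elim
        case (elim s)
        show ?case
        proof (cases "0 \<le> s \<and> s < T")
          case True
          have "x < phi s \<longleftrightarrow> c \<le> s"
          proof (cases "x < T")
            case True2: True
            show ?thesis using phi_gt_iff[OF True2, of s] True elim True2 by (simp add: c_def)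
          next
            case False
            then show ?thesis using phi_props(2)[of s] True by (simp add: c_def)
          qed
          then show ?thesis using True by (auto simp: indicator_def)
        next
          case False
          then show ?thesis using cT by (auto simp: indicator_def)
        qed
      qed
    qed
    also have "\<dots> = (\<integral>s. indicator {0..<T} s * G (phi s) \<partial>lborel) - (\<integral>s. indicator {0..<c} s * G (phi s) \<partial>lborel)"
      by (rule Bochner_Integration.integral_diff[OF int int_sub[OF G cT(2) int]])
    also have "\<dots> = 0" using Z'[OF inT order.refl] Z'[OF cT] by simp
    finally show ?thesis .
  qed
  have nnfin: "(\<integral>\<^sup>+y. ennreal (f y) \<partial>N0 T) \<noteq> \<infinity>" if "integrable (N0 T) f" for f :: "real \<Rightarrow> real"
  proof -
    have "(\<integral>\<^sup>+y. ennreal (f y) \<partial>N0 T) \<le> (\<integral>\<^sup>+y. ennreal (norm (f y)) \<partial>N0 T)"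
      by (intro nn_integral_mono) (auto intro: ennreal_leI)
    also have "\<dots> < \<infinity>" using that by (simp add: integrable_iff_bounded)
    finally show ?thesis by simp
  qed
  have dens: "density (N0 T) (\<lambda>y. ennreal (G y)) = density (N0 T) (\<lambda>y. ennreal (- G y))"
  proof (rule measure_eqI_lessThan)
    fix x :: real
    have ix: "integrable (N0 T) (\<lambda>y. indicator {x<..} y * G y)"
      using integrable_mult_indicator[of "{x<..}" "N0 T" G] iG by simp
    have e1: "emeasure (density (N0 T) (\<lambda>y. ennreal (G y))) {x<..} = (\<integral>\<^sup>+y. ennreal (indicator {x<..} y * G y) \<partial>N0 T)"
      by (subst emeasure_density) (auto intro!: nn_integral_cong simp: indicator_def)
    have e2: "emeasure (density (N0 T) (\<lambda>y. ennreal (- G y))) {x<..} = (\<integral>\<^sup>+y. ennreal (- (indicator {x<..} y * G y)) \<partial>N0 T)"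
      by (subst emeasure_density) (auto intro!: nn_integral_cong simp: indicator_def)
    have f1: "(\<integral>\<^sup>+y. ennreal (indicator {x<..} y * G y) \<partial>N0 T) \<noteq> \<infinity>" using nnfin[OF ix] .
    have f2: "(\<integral>\<^sup>+y. ennreal (- (indicator {x<..} y * G y)) \<partial>N0 T) \<noteq> \<infinity>"
      using nnfin[of "\<lambda>y. - (indicator {x<..} y * G y)"] ix by simp
    define P where "P = (\<integral>\<^sup>+y. ennreal (indicator {x<..} y * G y) \<partial>N0 T)"
    define Q where "Q = (\<integral>\<^sup>+y. ennreal (- (indicator {x<..} y * G y)) \<partial>N0 T)"
    have "enn2real P = enn2real Q"
      using real_lebesgue_integral_def[OF ix] K[of x] unfolding P_def Q_def by simp
    moreover have "P = ennreal (enn2real P)" "Q = ennreal (enn2real Q)"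
      using f1 f2 unfolding P_def Q_def by (simp_all add: ennreal_enn2real_if infinity_ennreal_def)
    ultimately have "P = Q" by metis
    then have "(\<integral>\<^sup>+y. ennreal (indicator {x<..} y * G y) \<partial>N0 T) = (\<integral>\<^sup>+y. ennreal (- (indicator {x<..} y * G y)) \<partial>N0 T)"
      unfolding P_def Q_def .
    then show "emeasure (density (N0 T) (\<lambda>y. ennreal (G y))) {x<..} = emeasure (density (N0 T) (\<lambda>y. ennreal (- G y))) {x<..}"
      using e1 e2 by simp
    show "emeasure (density (N0 T) (\<lambda>y. ennreal (G y))) {x<..} < \<infinity>"
      using e1 f1 by (simp add: less_top)
  qed auto
  have "AE y in N0 T. ennreal (G y) = ennreal (- G y)"
    using dens F.density_unique_iff[of "\<lambda>y. ennreal (G y)" "\<lambda>y. ennreal (- G y)"] by simp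
  then show ?thesis
  proof eventually_elim
    case (elim y) then show ?case
      by (cases "G y \<le> 0") (auto simp: ennreal_neg)
  qed
qed

lemma abs_le_sq1: "\<bar>x::real\<bar> \<le> x\<^sup>2 + 1"
proof -
  have "0 \<le> (\<bar>x\<bar> - 1)\<^sup>2" by simp
  also have "(\<bar>x\<bar> - 1)\<^sup>2 = x\<^sup>2 - 2 * \<bar>x\<bar> + 1" by (simp add: power2_eq_square algebra_simps)
  finally show ?thesis by simp
qed

abbreviation "NN \<equiv> delta_measure TS 0 T"

lemma finite_NN: "finite_measure NN"
proof (rule finite_measureI)
  interpret F: finite_measure "N0 T" by (rule finite_N0)
  have "emeasure NN (space NN) = emeasure (N0 T) (space (N0 T))"
    unfolding dm_eq by simp
  then show "emeasure NN (space NN) \<noteq> \<infinity>" by simp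
qed

lemma measure_NN: "measure NN (space NN) = T"
proof -
  have "measure NN (space NN) = measure (N0 T) UNIV" unfolding dm_eq by simp
  also have "\<dots> = enn2real (emeasure lborel (phi -` UNIV \<inter> {0..<T}))"
    by (simp add: measure_def emeasure_N0)
  also have "\<dots> = T" using Tpos by simp
  finally show ?thesis .
qed

lemma AE_NN: "AE x in N0 T. P x \<Longrightarrow> AE x in NN. P x"
  unfolding dm_eq by (rule AE_completion)

lemma AE_NN_range: "AE x in NN. x \<in> TS \<and> 0 \<le> x \<and> x < T"
  using AE_NN[OF AE_N0_range] Tpos by simp

lemma L2_int: assumes "L2_delta TS 0 T g" shows "integrable NN g"
proof -
  interpret F: finite_measure NN by (rule finite_NN)
  have m: "g \<in> borel_measurable NN" "integrable NN (\<lambda>t. (g t)\<^sup>2)" using assms by (auto simp: L2_delta_def)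
  show ?thesis
  proof (rule Bochner_Integration.integrable_bound[of _ "\<lambda>t. (g t)\<^sup>2 + 1"])
    show "integrable NN (\<lambda>t. (g t)\<^sup>2 + 1)" using m by simp
    show "AE x in NN. norm (g x) \<le> norm ((g x)\<^sup>2 + 1)"
    proof (intro AE_I2)
      fix x
      have "\<bar>g x\<bar> \<le> (g x)\<^sup>2 + 1" by (rule abs_le_sq1)
      then show "norm (g x) \<le> norm ((g x)\<^sup>2 + 1)" by simp
    qed
  qed (use m in auto)
qed

lemma deriv_rep:
  assumes "is_delta_deriv TS T u g"
  shows "\<exists>G. G \<in> borel_measurable borel \<and> (AE x in N0 T. g x = G x)
     \<and> integrable lborel (\<lambda>s. indicator {0..<T} s * G (phi s))
     \<and> integrable lborel (\<lambda>s. indicator {0..<T} s * (G (phi s))\<^sup>2)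
     \<and> delta_int TS 0 T (\<lambda>t. (g t)\<^sup>2) = (\<integral>s. indicator {0..<T} s * (G (phi s))\<^sup>2 \<partial>lborel)
     \<and> (\<forall>c\<in>TS. 0 \<le> c \<longrightarrow> c \<le> T \<longrightarrow> u c = u 0 + (\<integral>s. indicator {0..<c} s * G (phi s) \<partial>lborel))"
proof -
  have L2: "L2_delta TS 0 T g" and rep: "\<And>t. t \<in> TS \<inter> {0..T} \<Longrightarrow> u t = u 0 + delta_int TS 0 t g"
    using assms by (auto simp: is_delta_deriv_def)
  have gm: "g \<in> borel_measurable (completion (N0 T))" using L2 by (simp add: L2_delta_def dm_eq)
  obtain G where G: "G \<in> borel_measurable borel" and ae: "AE x in N0 T. g x = G x"
    using rep_ex[OF gm] by blast
  have i1: "integrable lborel (\<lambda>s. indicator {0..<T} s * G (phi s))"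
    by (rule int_rep_back[OF G ae L2_int[OF L2]])
  have G2: "(\<lambda>x. (G x)\<^sup>2) \<in> borel_measurable borel" using G by measurable
  have ae2: "AE x in N0 T. (g x)\<^sup>2 = (G x)\<^sup>2" using ae by eventually_elim simp
  have i2: "integrable lborel (\<lambda>s. indicator {0..<T} s * (G (phi s))\<^sup>2)"
    using int_rep_back[OF G2 ae2] L2 by (simp add: L2_delta_def)
  have e2: "delta_int TS 0 T (\<lambda>t. (g t)\<^sup>2) = (\<integral>s. indicator {0..<T} s * (G (phi s))\<^sup>2 \<partial>lborel)"
    using int_rep(2)[OF G2 ae2 i2] .
  have "u c = u 0 + (\<integral>s. indicator {0..<c} s * G (phi s) \<partial>lborel)" if c: "c \<in> TS" "0 \<le> c" "c \<le> T" for c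
  proof -
    have "u c = u 0 + delta_int TS 0 c g" using rep c by auto
    also have "delta_int TS 0 c g = (\<integral>s. indicator {0..<c} s * G (phi s) \<partial>lborel)"
      by (rule int_rep(2)[OF G AE_N0_mono[OF c(3) ae] int_sub[OF G c(3) i1]])
    finally show ?thesis .
  qed
  then show ?thesis using G ae i1 i2 e2 by blast
qed

lemma deriv_int_c:
  assumes "is_delta_deriv TS T u g" "0 \<le> c" "c \<le> T"
  shows "integrable (delta_measure TS 0 c) g"
proof -
  obtain G where G: "G \<in> borel_measurable borel" "AE x in N0 T. g x = G x"
     "integrable lborel (\<lambda>s. indicator {0..<T} s * G (phi s))"
    using deriv_rep[OF assms(1)] by blast
  show ?thesis
    by (rule int_rep(1)[OF G(1) AE_N0_mono[OF assms(3) G(2)] int_sub[OF G(1) assms(3) G(3)]])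
qed

lemma deriv_unique:
  assumes "is_delta_deriv TS T u g1" "is_delta_deriv TS T u g2"
  shows "AE x in N0 T. g1 x = g2 x"
proof -
  obtain G1 where G1: "G1 \<in> borel_measurable borel" "AE x in N0 T. g1 x = G1 x"
     "integrable lborel (\<lambda>s. indicator {0..<T} s * G1 (phi s))"
     "\<forall>c\<in>TS. 0 \<le> c \<longrightarrow> c \<le> T \<longrightarrow> u c = u 0 + (\<integral>s. indicator {0..<c} s * G1 (phi s) \<partial>lborel)"
    using deriv_rep[OF assms(1)] by blast
  obtain G2 where G2: "G2 \<in> borel_measurable borel" "AE x in N0 T. g2 x = G2 x"
     "integrable lborel (\<lambda>s. indicator {0..<T} s * G2 (phi s))"
     "\<forall>c\<in>TS. 0 \<le> c \<longrightarrow> c \<le> T \<longrightarrow> u c = u 0 + (\<integral>s. indicator {0..<c} s * G2 (phi s) \<partial>lborel)"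
    using deriv_rep[OF assms(2)] by blast
  let ?G = "\<lambda>x. G1 x - G2 x"
  have Gm: "?G \<in> borel_measurable borel" using G1(1) G2(1) by measurable
  have eqf: "\<And>c. (\<lambda>s. indicator {0..<c} s * ?G (phi s)) = (\<lambda>s. indicator {0..<c} s * G1 (phi s) - indicator {0..<c} s * G2 (phi s))"
    by (auto simp: algebra_simps)
  have iG: "integrable lborel (\<lambda>s. indicator {0..<T} s * ?G (phi s))"
    unfolding eqf using G1(3) G2(3) by simp
  have "AE x in N0 T. ?G x = 0"
  proof (rule uniq0[OF Gm iG])
    fix c assume c: "c \<in> TS" "0 \<le> c" "c \<le> T"
    have "(\<integral>s. indicator {0..<c} s * ?G (phi s) \<partial>lborel)
       = (\<integral>s. indicator {0..<c} s * G1 (phi s) \<partial>lborel) - (\<integral>s. indicator {0..<c} s * G2 (phi s) \<partial>lborel)"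
      unfolding eqf by (rule Bochner_Integration.integral_diff[OF int_sub[OF G1(1) c(3) G1(3)] int_sub[OF G2(1) c(3) G2(3)]])
    also have "\<dots> = 0" using G1(4) G2(4) c by force
    finally show "(\<integral>s. indicator {0..<c} s * ?G (phi s) \<partial>lborel) = 0" .
  qed
  then show ?thesis using G1(2) G2(2) by eventually_elim simp
qed

lemma deriv_lin:
  assumes "is_delta_deriv TS T u g" "is_delta_deriv TS T v k"
  shows "is_delta_deriv TS T (\<lambda>t. a * u t + b * v t) (\<lambda>t. a * g t + b * k t)"
proof -
  have L: "L2_delta TS 0 T g" "L2_delta TS 0 T k" using assms by (auto simp: is_delta_deriv_def)
  have gm[measurable]: "g \<in> borel_measurable NN" "k \<in> borel_measurable NN" using L by (auto simp: L2_delta_def)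
  have sq: "integrable NN (\<lambda>t. (g t)\<^sup>2)" "integrable NN (\<lambda>t. (k t)\<^sup>2)" using L by (auto simp: L2_delta_def)
  have "L2_delta TS 0 T (\<lambda>t. a * g t + b * k t)"
    unfolding L2_delta_def
  proof
    show "(\<lambda>t. a * g t + b * k t) \<in> borel_measurable NN" by measurable
    show "integrable NN (\<lambda>t. (a * g t + b * k t)\<^sup>2)"
    proof (rule Bochner_Integration.integrable_bound[of _ "\<lambda>t. 2 * a\<^sup>2 * (g t)\<^sup>2 + 2 * b\<^sup>2 * (k t)\<^sup>2"])
      show "integrable NN (\<lambda>t. 2 * a\<^sup>2 * (g t)\<^sup>2 + 2 * b\<^sup>2 * (k t)\<^sup>2)" using sq by simp
      show "(\<lambda>t. (a * g t + b * k t)\<^sup>2) \<in> borel_measurable NN" by measurable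
      show "AE x in NN. norm ((a * g x + b * k x)\<^sup>2) \<le> norm (2 * a\<^sup>2 * (g x)\<^sup>2 + 2 * b\<^sup>2 * (k x)\<^sup>2)"
      proof (intro AE_I2)
        fix x
        have "0 \<le> (a * g x - b * k x)\<^sup>2" by simp
        then have "(a * g x + b * k x)\<^sup>2 \<le> 2 * a\<^sup>2 * (g x)\<^sup>2 + 2 * b\<^sup>2 * (k x)\<^sup>2"
          by (simp add: power2_eq_square algebra_simps)
        then show "norm ((a * g x + b * k x)\<^sup>2) \<le> norm (2 * a\<^sup>2 * (g x)\<^sup>2 + 2 * b\<^sup>2 * (k x)\<^sup>2)"
          by simp
      qed
    qed
  qed
  moreover have "a * u t + b * v t = (a * u 0 + b * v 0) + delta_int TS 0 t (\<lambda>t. a * g t + b * k t)"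
    if t: "t \<in> TS \<inter> {0..T}" for t
  proof -
    have ig: "integrable (delta_measure TS 0 t) g" "integrable (delta_measure TS 0 t) k"
      using deriv_int_c[OF assms(1)] deriv_int_c[OF assms(2)] t by auto
    have "delta_int TS 0 t (\<lambda>t. a * g t + b * k t) = a * delta_int TS 0 t g + b * delta_int TS 0 t k"
      unfolding delta_int_def using ig by simp
    moreover have "u t = u 0 + delta_int TS 0 t g" "v t = v 0 + delta_int TS 0 t k"
      using assms t by (auto simp: is_delta_deriv_def)
    ultimately show ?thesis by (simp add: algebra_simps)
  qed
  ultimately show ?thesis by (simp add: is_delta_deriv_def)
qed

lemma H10_dd: "u \<in> H10 TS T \<Longrightarrow> is_delta_deriv TS T u (dderiv TS T u)"
proof -
  assume "u \<in> H10 TS T"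
  then obtain g where "is_delta_deriv TS T u g" by (auto simp: H10_def)
  then show ?thesis unfolding dderiv_def by (rule someI[where P="is_delta_deriv TS T u"])
qed

lemma H10_lin:
  assumes "u \<in> H10 TS T" "v \<in> H10 TS T"
  shows "(\<lambda>t. a * u t + b * v t) \<in> H10 TS T"
    and "AE x in N0 T. dderiv TS T (\<lambda>t. a * u t + b * v t) x = a * dderiv TS T u x + b * dderiv TS T v x"
proof -
  have d: "is_delta_deriv TS T (\<lambda>t. a * u t + b * v t) (\<lambda>t. a * dderiv TS T u t + b * dderiv TS T v t)"
    by (rule deriv_lin[OF H10_dd[OF assms(1)] H10_dd[OF assms(2)]])
  then show w: "(\<lambda>t. a * u t + b * v t) \<in> H10 TS T" using assms by (auto simp: H10_def)
  show "AE x in N0 T. dderiv TS T (\<lambda>t. a * u t + b * v t) x = a * dderiv TS T u x + b * dderiv TS T v x"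
    by (rule deriv_unique[OF H10_dd[OF w] d])
qed

abbreviation "nrm \<equiv> H_norm TS T"

lemma amgm: fixes e x y :: real assumes "0 < e" shows "\<bar>x * y\<bar> \<le> (e * y\<^sup>2 + x\<^sup>2 / e) / 2"
proof -
  have "0 \<le> (e * \<bar>y\<bar> - \<bar>x\<bar>)\<^sup>2" by simp
  also have "(e * \<bar>y\<bar> - \<bar>x\<bar>)\<^sup>2 = e * (e * y\<^sup>2 + x\<^sup>2 / e) - 2 * e * \<bar>x * y\<bar>"
    using assms by (simp add: power2_eq_square algebra_simps abs_mult)
  finally have "e * (2 * \<bar>x * y\<bar>) \<le> e * (e * y\<^sup>2 + x\<^sup>2 / e)" by (simp add: algebra_simps)
  then have "2 * \<bar>x * y\<bar> \<le> e * y\<^sup>2 + x\<^sup>2 / e" using assms by simp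
  then show ?thesis by simp
qed

lemma trick:
  fixes X n K :: real
  assumes n: "0 \<le> n" and K: "0 \<le> K" and b: "\<And>e. 0 < e \<Longrightarrow> \<bar>X\<bar> \<le> (e * n\<^sup>2 + K / e) / 2"
  shows "\<bar>X\<bar> \<le> (1 + K) / 2 * n"
proof (cases "n = 0")
  case False
  then have np: "0 < n" using n by simp
  have "\<bar>X\<bar> \<le> ((1/n) * n\<^sup>2 + K / (1/n)) / 2" by (rule b) (simp add: np)
  also have "(1/n) * n\<^sup>2 = n" using np by (simp add: power2_eq_square)
  also have "K / (1/n) = K * n" by simp
  also have "(n + K * n) / 2 = (1 + K) / 2 * n" by (simp add: algebra_simps)
  finally show ?thesis .
next
  case True
  show ?thesis
  proof (rule ccontr)
    assume "\<not> ?thesis"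
    then have "\<not> \<bar>X\<bar> \<le> 0" using True by simp
    then have Xp: "0 < \<bar>X\<bar>" by linarith
    define e where "e = K / \<bar>X\<bar> + 1"
    have ep: "0 < e" using Xp K by (simp add: e_def add_nonneg_pos)
    have "\<bar>X\<bar> \<le> (e * n\<^sup>2 + K / e) / 2" by (rule b[OF ep])
    then have a: "\<bar>X\<bar> \<le> (K / e) / 2" using True by simp
    have "\<bar>X\<bar> * e = \<bar>X\<bar> * (K / \<bar>X\<bar>) + \<bar>X\<bar>" by (simp add: e_def distrib_left)
    also have "\<bar>X\<bar> * (K / \<bar>X\<bar>) = K" using Xp by simp
    finally have "K < \<bar>X\<bar> * e" using Xp by linarith
    then have "K / e < \<bar>X\<bar>" using ep by (simp add: divide_less_eq)
    moreover have "0 \<le> K / e" using K ep by simp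
    then have "K / e / 2 \<le> K / e" by simp
    ultimately show False using a by (meson order_trans le_less_trans less_irrefl)
  qed
qed

lemma nrm_sq: "0 \<le> delta_int TS 0 T (\<lambda>t. (dderiv TS T u t)\<^sup>2)"
  "(nrm u)\<^sup>2 = delta_int TS 0 T (\<lambda>t. (dderiv TS T u t)\<^sup>2)" "0 \<le> nrm u"
proof -
  show nn: "0 \<le> delta_int TS 0 T (\<lambda>t. (dderiv TS T u t)\<^sup>2)"
    by (unfold delta_int_def, rule integral_nonneg_AE, simp)
  then show "(nrm u)\<^sup>2 = delta_int TS 0 T (\<lambda>t. (dderiv TS T u t)\<^sup>2)" by (simp add: H_norm_def)
  show "0 \<le> nrm u" using nn by (simp add: H_norm_def)
qed

lemma ptbound:
  assumes u: "u \<in> H10 TS T" and c: "c \<in> TS" "0 \<le> c" "c \<le> T"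
  shows "\<bar>u c\<bar> \<le> (1 + T) / 2 * nrm u"
proof -
  obtain G where G: "G \<in> borel_measurable borel"
     "integrable lborel (\<lambda>s. indicator {0..<T} s * G (phi s))"
     "integrable lborel (\<lambda>s. indicator {0..<T} s * (G (phi s))\<^sup>2)"
     "delta_int TS 0 T (\<lambda>t. (dderiv TS T u t)\<^sup>2) = (\<integral>s. indicator {0..<T} s * (G (phi s))\<^sup>2 \<partial>lborel)"
     "\<forall>c\<in>TS. 0 \<le> c \<longrightarrow> c \<le> T \<longrightarrow> u c = u 0 + (\<integral>s. indicator {0..<c} s * G (phi s) \<partial>lborel)"
    using deriv_rep[OF H10_dd[OF u]] by blast
  have u0: "u 0 = 0" using u by (simp add: H10_def)
  have uc: "u c = (\<integral>s. indicator {0..<c} s * G (phi s) \<partial>lborel)" using G(5) c u0 by simp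
  let ?A = "\<integral>s. indicator {0..<T} s * (G (phi s))\<^sup>2 \<partial>lborel"
  have nA: "(nrm u)\<^sup>2 = ?A" using nrm_sq(2)[of u] G(4) by simp
  have ic: "integrable lborel (\<lambda>s. indicator {0..<c} s * G (phi s))" by (rule int_sub[OF G(1) c(3) G(2)])
  have iT: "integrable lborel (indicator {0..<T} :: real \<Rightarrow> real)" using Tpos by simp
  show ?thesis unfolding uc
  proof (rule trick[OF nrm_sq(3)])
    show "0 \<le> T" using Tpos by simp
    fix e :: real assume e: "0 < e"
    have "\<bar>\<integral>s. indicator {0..<c} s * G (phi s) \<partial>lborel\<bar>
        \<le> (\<integral>s. e / 2 * (indicator {0..<T} s * (G (phi s))\<^sup>2) + 1 / (2 * e) * indicator {0..<T} s \<partial>lborel)"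
    proof (rule integral_abs_bound_integral[OF ic])
      show "integrable lborel (\<lambda>s. e / 2 * (indicator {0..<T} s * (G (phi s))\<^sup>2) + 1 / (2 * e) * indicator {0..<T} s)"
        using G(3) iT by simp
      fix s :: real
      show "\<bar>indicator {0..<c} s * G (phi s)\<bar> \<le> e / 2 * (indicator {0..<T} s * (G (phi s))\<^sup>2) + 1 / (2 * e) * indicator {0..<T} s"
      proof (cases "s \<in> {0..<c}")
        case True
        then have "s \<in> {0..<T}" using c by auto
        then show ?thesis using True amgm[OF e, of 1 "G (phi s)"] by (simp add: field_simps)
      next
        case False
        then show ?thesis using e by (simp add: indicator_def)
      qed
    qed
    also have "\<dots> = e / 2 * ?A + 1 / (2 * e) * T"
      using G(3) iT Tpos by simp
    also have "\<dots> = (e * (nrm u)\<^sup>2 + T / e) / 2" using nA by (simp add: field_simps)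
    finally show "\<bar>\<integral>s. indicator {0..<c} s * G (phi s) \<partial>lborel\<bar> \<le> (e * (nrm u)\<^sup>2 + T / e) / 2" .
  qed
qed

lemma sig_meas_NN:
  assumes u: "u \<in> H10 TS T"
  shows "(\<lambda>t. u (sig t)) \<in> borel_measurable NN"
proof -
  obtain G where G: "G \<in> borel_measurable borel"
     "\<forall>c\<in>TS. 0 \<le> c \<longrightarrow> c \<le> T \<longrightarrow> u c = u 0 + (\<integral>s. indicator {0..<c} s * G (phi s) \<partial>lborel)"
    using deriv_rep[OF H10_dd[OF u]] by blast
  have u0: "u 0 = 0" using u by (simp add: H10_def)
  define H where "H s = indicator {0..<T} s * G (phi s)" for s
  have Hm[measurable]: "H \<in> borel_measurable borel" using meas_ind[OF G(1), of T] by (simp add: H_def[abs_def])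
  define V where "V y = (\<integral>s. (if s < y then 1 else 0) * H s \<partial>lborel)" for y
  have "(\<lambda>(y, s). (if s < y then 1 else (0::real)) * H s) \<in> borel_measurable (borel \<Otimes>\<^sub>M lborel)"
    by measurable
  then have Vm: "V \<in> borel_measurable borel" unfolding V_def
    by (rule lborel.borel_measurable_lebesgue_integral[where f="\<lambda>y s. (if s < y then 1 else 0) * H s", simplified])
  have r: "AE x in N0 T. x \<in> TS \<and> 0 \<le> x \<and> x < T" using AE_N0_range[of T] Tpos by simp
  have "AE x in N0 T. u (sig x) = V (sig x)"
    using r
  proof eventually_elim
    case (elim x)
    then have c: "sig x \<in> TS" "0 \<le> sig x" "sig x \<le> T" using sig_props[of x] by auto
    have "u (sig x) = (\<integral>s. indicator {0..<sig x} s * G (phi s) \<partial>lborel)" using G(2) c u0 by simp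
    also have "\<dots> = V (sig x)" unfolding V_def H_def
      by (rule Bochner_Integration.integral_cong) (use c in \<open>auto simp: indicator_def\<close>)
    finally show ?case .
  qed
  moreover have "(\<lambda>t. V (sig t)) \<in> borel_measurable (N0 T)"
    using measurable_compose[OF sig_meas Vm] measurable_cong_sets[OF sets_N0 refl] by blast
  ultimately show ?thesis unfolding dm_eq by (intro meas_completion_AE) auto
qed

lemma sig_bound:
  assumes u: "u \<in> H10 TS T"
  shows "AE x in NN. \<bar>u (sig x)\<bar> \<le> (1 + T) / 2 * nrm u"
  using AE_NN_range
proof eventually_elim
  case (elim x)
  then show ?case using sig_props[of x] by (intro ptbound[OF u]) auto
qed

lemma Dm: "u \<in> H10 TS T \<Longrightarrow> dderiv TS T u \<in> borel_measurable NN"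
  "u \<in> H10 TS T \<Longrightarrow> integrable NN (\<lambda>t. (dderiv TS T u t)\<^sup>2)"
  using H10_dd[of u] by (auto simp: is_delta_deriv_def L2_delta_def)

lemma prod_int:
  fixes f g :: "real \<Rightarrow> real"
  assumes [measurable]: "f \<in> borel_measurable NN" "g \<in> borel_measurable NN"
    and "integrable NN (\<lambda>t. (f t)\<^sup>2)" "integrable NN (\<lambda>t. (g t)\<^sup>2)"
  shows "integrable NN (\<lambda>t. f t * g t)"
proof (rule Bochner_Integration.integrable_bound[of _ "\<lambda>t. ((g t)\<^sup>2 + (f t)\<^sup>2) / 2"])
  show "integrable NN (\<lambda>t. ((g t)\<^sup>2 + (f t)\<^sup>2) / 2)" using assms(3,4) by simp
  show "(\<lambda>t. f t * g t) \<in> borel_measurable NN" by measurable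
  show "AE x in NN. norm (f x * g x) \<le> norm (((g x)\<^sup>2 + (f x)\<^sup>2) / 2)"
    using amgm[of 1 "f _" "g _"] by (intro AE_I2) simp
qed

lemma DD_int: "u \<in> H10 TS T \<Longrightarrow> v \<in> H10 TS T \<Longrightarrow> integrable NN (\<lambda>t. dderiv TS T u t * dderiv TS T v t)"
  by (rule prod_int) (auto intro: Dm)

lemma SS_int:
  assumes u: "u \<in> H10 TS T" and v: "v \<in> H10 TS T"
  shows "integrable NN (\<lambda>t. u (sig t) * v (sig t))"
proof -
  interpret F: finite_measure NN by (rule finite_NN)
  have [measurable]: "(\<lambda>t. u (sig t)) \<in> borel_measurable NN" "(\<lambda>t. v (sig t)) \<in> borel_measurable NN"
    using sig_meas_NN u v by auto
  show ?thesis
  proof (rule F.integrable_const_bound)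
    show "AE x in NN. norm (u (sig x) * v (sig x)) \<le> ((1 + T) / 2 * nrm u) * ((1 + T) / 2 * nrm v)"
      using sig_bound[OF u] sig_bound[OF v]
    proof eventually_elim
      case (elim x)
      have "\<bar>u (sig x)\<bar> * \<bar>v (sig x)\<bar> \<le> ((1 + T) / 2 * nrm u) * ((1 + T) / 2 * nrm v)"
        using nrm_sq(3)[of u] Tpos by (intro mult_mono[OF elim]) auto
      then show ?case by (simp add: abs_mult)
    qed
  qed measurable
qed

lemma hS_int:
  assumes h: "L2_delta TS 0 T h" and v: "v \<in> H10 TS T"
  shows "integrable NN (\<lambda>t. h t * v (sig t))"
proof -
  have [measurable]: "(\<lambda>t. v (sig t)) \<in> borel_measurable NN" using sig_meas_NN v by auto
  have [measurable]: "h \<in> borel_measurable NN" using h by (simp add: L2_delta_def)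
  have ih: "integrable NN h" by (rule L2_int[OF h])
  show ?thesis
  proof (rule Bochner_Integration.integrable_bound[of _ "\<lambda>t. ((1 + T) / 2 * nrm v) * \<bar>h t\<bar>"])
    show "integrable NN (\<lambda>t. ((1 + T) / 2 * nrm v) * \<bar>h t\<bar>)" using ih by simp
    show "(\<lambda>t. h t * v (sig t)) \<in> borel_measurable NN" by measurable
    show "AE x in NN. norm (h x * v (sig x)) \<le> norm ((1 + T) / 2 * nrm v * \<bar>h x\<bar>)"
      using sig_bound[OF v]
    proof eventually_elim
      case (elim x)
      have "\<bar>h x * v (sig x)\<bar> \<le> \<bar>h x\<bar> * ((1 + T) / 2 * nrm v)"
        unfolding abs_mult by (rule mult_left_mono[OF elim]) simp
      also have "\<dots> \<le> \<bar>(1 + T) / 2 * nrm v * \<bar>h x\<bar>\<bar>" by (simp add: mult.commute)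
      finally show ?case by simp
    qed
  qed
qed

lemma SS_sq_int: "u \<in> H10 TS T \<Longrightarrow> integrable NN (\<lambda>t. (u (sig t))\<^sup>2)"
  using SS_int[of u u] by (simp add: power2_eq_square)

lemma tt_TS: "right_dense TS x \<Longrightarrow> x \<in> TS"
  by (simp add: right_dense_def)

lemma int_lin:
  fixes f g :: "real \<Rightarrow> real"
  assumes "integrable NN f" "integrable NN g"
  shows "integral\<^sup>L NN (\<lambda>t. a * f t + b * g t) = a * integral\<^sup>L NN f + b * integral\<^sup>L NN g"
  using assms by simp

lemma abs_int_AE:
  fixes f g :: "real \<Rightarrow> real"
  assumes "integrable NN f" "integrable NN g" "AE x in NN. \<bar>f x\<bar> \<le> g x"
  shows "\<bar>integral\<^sup>L NN f\<bar> \<le> integral\<^sup>L NN g"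
proof -
  have "\<bar>integral\<^sup>L NN f\<bar> \<le> integral\<^sup>L NN (\<lambda>x. norm (f x))"
    using integral_norm_bound[of NN f] by simp
  also have "\<dots> \<le> integral\<^sup>L NN g"
    using assms by (intro integral_mono_AE) auto
  finally show ?thesis .
qed

lemma abs_int_const:
  fixes f :: "real \<Rightarrow> real"
  assumes "integrable NN f" "AE x in NN. \<bar>f x\<bar> \<le> B"
  shows "\<bar>integral\<^sup>L NN f\<bar> \<le> T * B"
proof -
  interpret F: finite_measure NN by (rule finite_NN)
  have "\<bar>integral\<^sup>L NN f\<bar> \<le> integral\<^sup>L NN (\<lambda>x. B)"
    by (rule abs_int_AE[OF assms(1) _ assms(2)]) simp
  also have "\<dots> = T * B" using measure_NN by simp
  finally show ?thesis .
qed

end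

locale tss2 = tss +
  fixes lam :: real and h :: "real \<Rightarrow> real" and p :: nat and tt d :: "nat \<Rightarrow> real"
  assumes hL2: "L2_delta TS 0 T h"
    and ttp: "\<forall>j\<in>{1..p}. right_dense TS (tt j) \<and> 0 < tt j \<and> tt j < T"
begin

definition "Lf u v = delta_int TS 0 T (\<lambda>t. dderiv TS T u t * dderiv TS T v t)
                + lam * delta_int TS 0 T (\<lambda>t. u (sig t) * v (sig t))
                - delta_int TS 0 T (\<lambda>t. h t * v (sig t))
                + (\<Sum>j=1..p. d j * v (tt j))"

definition "Ff v = 1/2 * delta_int TS 0 T (\<lambda>t. (dderiv TS T v t)\<^sup>2)
        + lam/2 * delta_int TS 0 T (\<lambda>t. (v (sig t))\<^sup>2)
        - delta_int TS 0 T (\<lambda>t. h t * v (sig t))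
        + (\<Sum>j=1..p. d j * v (tt j))"

lemma Lf_lin:
  assumes u: "u \<in> H10 TS T" and v: "v \<in> H10 TS T" and w: "w \<in> H10 TS T"
  shows "Lf u (\<lambda>t. a * v t + b * w t) = a * Lf u v + b * Lf u w"
proof -
  let ?z = "\<lambda>t. a * v t + b * w t"
  have z: "?z \<in> H10 TS T" by (rule H10_lin(1)[OF v w])
  have ae: "AE x in NN. dderiv TS T ?z x = a * dderiv TS T v x + b * dderiv TS T w x"
    by (rule AE_NN[OF H10_lin(2)[OF v w]])
  have [measurable]: "dderiv TS T u \<in> borel_measurable NN" "dderiv TS T v \<in> borel_measurable NN"
    "dderiv TS T w \<in> borel_measurable NN" "dderiv TS T ?z \<in> borel_measurable NN"
    using Dm u v w z by auto
  have "integral\<^sup>L NN (\<lambda>t. dderiv TS T u t * dderiv TS T ?z t)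
      = integral\<^sup>L NN (\<lambda>t. a * (dderiv TS T u t * dderiv TS T v t) + b * (dderiv TS T u t * dderiv TS T w t))"
    by (rule integral_cong_AE) (use ae in \<open>auto simp: algebra_simps elim!: eventually_mono\<close>)
  also have "\<dots> = a * integral\<^sup>L NN (\<lambda>t. dderiv TS T u t * dderiv TS T v t) + b * integral\<^sup>L NN (\<lambda>t. dderiv TS T u t * dderiv TS T w t)"
    by (rule int_lin[OF DD_int[OF u v] DD_int[OF u w]])
  finally have e1: "integral\<^sup>L NN (\<lambda>t. dderiv TS T u t * dderiv TS T ?z t) = a * integral\<^sup>L NN (\<lambda>t. dderiv TS T u t * dderiv TS T v t) + b * integral\<^sup>L NN (\<lambda>t. dderiv TS T u t * dderiv TS T w t)" .
  have "integral\<^sup>L NN (\<lambda>t. u (sig t) * ?z (sig t))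
      = integral\<^sup>L NN (\<lambda>t. a * (u (sig t) * v (sig t)) + b * (u (sig t) * w (sig t)))"
    by (simp add: algebra_simps)
  also have "\<dots> = a * integral\<^sup>L NN (\<lambda>t. u (sig t) * v (sig t)) + b * integral\<^sup>L NN (\<lambda>t. u (sig t) * w (sig t))"
    by (rule int_lin[OF SS_int[OF u v] SS_int[OF u w]])
  finally have e2: "integral\<^sup>L NN (\<lambda>t. u (sig t) * ?z (sig t)) = a * integral\<^sup>L NN (\<lambda>t. u (sig t) * v (sig t)) + b * integral\<^sup>L NN (\<lambda>t. u (sig t) * w (sig t))" .
  have "integral\<^sup>L NN (\<lambda>t. h t * ?z (sig t))
      = integral\<^sup>L NN (\<lambda>t. a * (h t * v (sig t)) + b * (h t * w (sig t)))"
    by (simp add: algebra_simps)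
  also have "\<dots> = a * integral\<^sup>L NN (\<lambda>t. h t * v (sig t)) + b * integral\<^sup>L NN (\<lambda>t. h t * w (sig t))"
    by (rule int_lin[OF hS_int[OF hL2 v] hS_int[OF hL2 w]])
  finally have e3: "integral\<^sup>L NN (\<lambda>t. h t * ?z (sig t)) = a * integral\<^sup>L NN (\<lambda>t. h t * v (sig t)) + b * integral\<^sup>L NN (\<lambda>t. h t * w (sig t))" .
  have e4: "(\<Sum>j=1..p. d j * ?z (tt j)) = a * (\<Sum>j=1..p. d j * v (tt j)) + b * (\<Sum>j=1..p. d j * w (tt j))"
    by (simp add: sum.distrib sum_distrib_left algebra_simps)
  show ?thesis unfolding Lf_def delta_int_def e1 e2 e3 e4 by (simp add: algebra_simps)
qed

lemma tri4: "\<bar>(x1::real) + x2 - x3 + x4\<bar> \<le> \<bar>x1\<bar> + \<bar>x2\<bar> + \<bar>x3\<bar> + \<bar>x4\<bar>"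
  by (simp add: abs_if)

lemma DD_bound:
  assumes u: "u \<in> H10 TS T" and v: "v \<in> H10 TS T"
  shows "\<bar>delta_int TS 0 T (\<lambda>t. dderiv TS T u t * dderiv TS T v t)\<bar> \<le> (1 + (nrm u)\<^sup>2) / 2 * nrm v"
proof (rule trick[OF nrm_sq(3)])
  show "0 \<le> (nrm u)\<^sup>2" by simp
  fix e :: real assume e: "0 < e"
  have "\<bar>integral\<^sup>L NN (\<lambda>t. dderiv TS T u t * dderiv TS T v t)\<bar>
      \<le> integral\<^sup>L NN (\<lambda>t. e / 2 * (dderiv TS T v t)\<^sup>2 + 1 / (2 * e) * (dderiv TS T u t)\<^sup>2)"
  proof (rule abs_int_AE[OF DD_int[OF u v]])
    show "integrable NN (\<lambda>t. e / 2 * (dderiv TS T v t)\<^sup>2 + 1 / (2 * e) * (dderiv TS T u t)\<^sup>2)"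
      using Dm(2)[OF u] Dm(2)[OF v] by simp
    show "AE x in NN. \<bar>dderiv TS T u x * dderiv TS T v x\<bar> \<le> e / 2 * (dderiv TS T v x)\<^sup>2 + 1 / (2 * e) * (dderiv TS T u x)\<^sup>2"
    proof (intro AE_I2)
      fix x
      show "\<bar>dderiv TS T u x * dderiv TS T v x\<bar> \<le> e / 2 * (dderiv TS T v x)\<^sup>2 + 1 / (2 * e) * (dderiv TS T u x)\<^sup>2"
        using amgm[OF e, of "dderiv TS T u x" "dderiv TS T v x"] by (simp add: field_simps)
    qed
  qed
  also have "\<dots> = e / 2 * integral\<^sup>L NN (\<lambda>t. (dderiv TS T v t)\<^sup>2) + 1 / (2 * e) * integral\<^sup>L NN (\<lambda>t. (dderiv TS T u t)\<^sup>2)"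
    by (rule int_lin[OF Dm(2)[OF v] Dm(2)[OF u]])
  also have "\<dots> = (e * (nrm v)\<^sup>2 + (nrm u)\<^sup>2 / e) / 2"
    using nrm_sq(2)[of u] nrm_sq(2)[of v] by (simp add: delta_int_def field_simps)
  finally show "\<bar>delta_int TS 0 T (\<lambda>t. dderiv TS T u t * dderiv TS T v t)\<bar> \<le> (e * (nrm v)\<^sup>2 + (nrm u)\<^sup>2 / e) / 2"
    by (simp add: delta_int_def)
qed

lemma Lf_bound:
  assumes u: "u \<in> H10 TS T"
  shows "\<exists>C. \<forall>v\<in>H10 TS T. \<bar>Lf u v\<bar> \<le> C * nrm v"
proof -
  define B1 where "B1 = (1 + T) / 2"
  have B1: "0 \<le> B1" using Tpos by (simp add: B1_def)
  define C where "C = (1 + (nrm u)\<^sup>2) / 2 + \<bar>lam\<bar> * (T * ((B1 * nrm u) * B1))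
     + integral\<^sup>L NN (\<lambda>t. \<bar>h t\<bar>) * B1 + (\<Sum>j=1..p. \<bar>d j\<bar>) * B1"
  have "\<bar>Lf u v\<bar> \<le> C * nrm v" if v: "v \<in> H10 TS T" for v
  proof -
    have nv: "0 \<le> nrm v" by (rule nrm_sq(3))
    have a: "\<bar>delta_int TS 0 T (\<lambda>t. dderiv TS T u t * dderiv TS T v t)\<bar> \<le> (1 + (nrm u)\<^sup>2) / 2 * nrm v"
      by (rule DD_bound[OF u v])
    have "\<bar>integral\<^sup>L NN (\<lambda>t. u (sig t) * v (sig t))\<bar> \<le> T * ((B1 * nrm u) * (B1 * nrm v))"
    proof (rule abs_int_const[OF SS_int[OF u v]])
      show "AE x in NN. \<bar>u (sig x) * v (sig x)\<bar> \<le> B1 * nrm u * (B1 * nrm v)"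
        using sig_bound[OF u] sig_bound[OF v]
      proof eventually_elim
        case (elim x)
        have "\<bar>u (sig x)\<bar> * \<bar>v (sig x)\<bar> \<le> (B1 * nrm u) * (B1 * nrm v)"
          using nrm_sq(3)[of u] B1 elim unfolding B1_def by (intro mult_mono) auto
        then show ?case by (simp add: abs_mult)
      qed
    qed
    then have "\<bar>lam * delta_int TS 0 T (\<lambda>t. u (sig t) * v (sig t))\<bar> \<le> \<bar>lam\<bar> * (T * ((B1 * nrm u) * (B1 * nrm v)))"
      unfolding delta_int_def abs_mult by (rule mult_left_mono) simp
    then have b: "\<bar>lam * delta_int TS 0 T (\<lambda>t. u (sig t) * v (sig t))\<bar> \<le> \<bar>lam\<bar> * (T * ((B1 * nrm u) * B1)) * nrm v"
      by (simp add: mult_ac)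
    have "\<bar>integral\<^sup>L NN (\<lambda>t. h t * v (sig t))\<bar> \<le> integral\<^sup>L NN (\<lambda>t. B1 * nrm v * \<bar>h t\<bar>)"
    proof (rule abs_int_AE[OF hS_int[OF hL2 v]])
      show "integrable NN (\<lambda>t. B1 * nrm v * \<bar>h t\<bar>)" using L2_int[OF hL2] by simp
      show "AE x in NN. \<bar>h x * v (sig x)\<bar> \<le> B1 * nrm v * \<bar>h x\<bar>"
        using sig_bound[OF v]
      proof eventually_elim
        case (elim x)
        have "\<bar>h x\<bar> * \<bar>v (sig x)\<bar> \<le> \<bar>h x\<bar> * (B1 * nrm v)"
          using elim unfolding B1_def by (intro mult_left_mono) auto
        then show ?case by (simp add: abs_mult mult_ac)
      qed
    qed
    also have "\<dots> = integral\<^sup>L NN (\<lambda>t. \<bar>h t\<bar>) * B1 * nrm v" by simp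
    finally have c: "\<bar>delta_int TS 0 T (\<lambda>t. h t * v (sig t))\<bar> \<le> integral\<^sup>L NN (\<lambda>t. \<bar>h t\<bar>) * B1 * nrm v"
      by (simp add: delta_int_def)
    have "\<bar>\<Sum>j=1..p. d j * v (tt j)\<bar> \<le> (\<Sum>j=1..p. \<bar>d j * v (tt j)\<bar>)" by (rule sum_abs)
    also have "\<dots> \<le> (\<Sum>j=1..p. \<bar>d j\<bar> * (B1 * nrm v))"
    proof (rule sum_mono)
      fix j assume j: "j \<in> {1..p}"
      then have "right_dense TS (tt j) \<and> 0 < tt j \<and> tt j < T" using ttp by blast
      then have "tt j \<in> TS" "0 \<le> tt j" "tt j \<le> T" by (auto simp: right_dense_def)
      then have "\<bar>v (tt j)\<bar> \<le> B1 * nrm v" unfolding B1_def by (rule ptbound[OF v])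
      then show "\<bar>d j * v (tt j)\<bar> \<le> \<bar>d j\<bar> * (B1 * nrm v)" unfolding abs_mult
        by (rule mult_left_mono) simp
    qed
    also have "\<dots> = (\<Sum>j=1..p. \<bar>d j\<bar>) * B1 * nrm v" by (simp add: sum_distrib_right sum_distrib_left mult_ac)
    finally have dd: "\<bar>\<Sum>j=1..p. d j * v (tt j)\<bar> \<le> (\<Sum>j=1..p. \<bar>d j\<bar>) * B1 * nrm v" .
    have "\<bar>Lf u v\<bar> \<le> \<bar>delta_int TS 0 T (\<lambda>t. dderiv TS T u t * dderiv TS T v t)\<bar>
        + \<bar>lam * delta_int TS 0 T (\<lambda>t. u (sig t) * v (sig t))\<bar>
        + \<bar>delta_int TS 0 T (\<lambda>t. h t * v (sig t))\<bar> + \<bar>\<Sum>j=1..p. d j * v (tt j)\<bar>"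
      unfolding Lf_def by (rule tri4)
    also have "\<dots> \<le> C * nrm v"
    proof -
      have "C * nrm v = (1 + (nrm u)\<^sup>2) / 2 * nrm v + \<bar>lam\<bar> * (T * ((B1 * nrm u) * B1)) * nrm v
         + integral\<^sup>L NN (\<lambda>t. \<bar>h t\<bar>) * B1 * nrm v + (\<Sum>j=1..p. \<bar>d j\<bar>) * B1 * nrm v"
        unfolding C_def by (simp add: distrib_right)
      then show ?thesis using a b c dd by linarith
    qed
    finally show ?thesis .
  qed
  then show ?thesis by blast
qed

lemma sigsq_bound:
  assumes w: "w \<in> H10 TS T"
  shows "\<bar>delta_int TS 0 T (\<lambda>t. (w (sig t))\<^sup>2)\<bar> \<le> T * ((1 + T) / 2 * nrm w)\<^sup>2"
  unfolding delta_int_def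
proof (rule abs_int_const[OF SS_sq_int[OF w]])
  show "AE x in NN. \<bar>(w (sig x))\<^sup>2\<bar> \<le> ((1 + T) / 2 * nrm w)\<^sup>2"
    using sig_bound[OF w]
  proof eventually_elim
    case (elim x)
    have "\<bar>w (sig x)\<bar>\<^sup>2 \<le> ((1 + T) / 2 * nrm w)\<^sup>2" by (rule power_mono[OF elim]) simp
    then show ?case by simp
  qed
qed

lemma diff_H:
  assumes u: "u \<in> H10 TS T" and v: "v \<in> H10 TS T"
  shows "(\<lambda>t. v t - u t) \<in> H10 TS T"
    "AE x in NN. dderiv TS T v x = dderiv TS T u x + dderiv TS T (\<lambda>t. v t - u t) x"
proof -
  have fe: "(\<lambda>t. v t - u t) = (\<lambda>t. 1 * v t + (- 1) * u t)" by simp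
  show "(\<lambda>t. v t - u t) \<in> H10 TS T" unfolding fe by (rule H10_lin(1)[OF v u])
  show "AE x in NN. dderiv TS T v x = dderiv TS T u x + dderiv TS T (\<lambda>t. v t - u t) x"
    using AE_NN[OF H10_lin(2)[OF v u, of 1 "-1"]] unfolding fe[symmetric]
    by eventually_elim simp
qed

lemma scale_H:
  assumes v: "v \<in> H10 TS T"
  shows "(\<lambda>t. s * v t) \<in> H10 TS T" "nrm (\<lambda>t. s * v t) = \<bar>s\<bar> * nrm v"
proof -
  have fe: "(\<lambda>t. s * v t) = (\<lambda>t. s * v t + 0 * v t)" by simp
  show sv: "(\<lambda>t. s * v t) \<in> H10 TS T" by (subst fe) (rule H10_lin(1)[OF v v])
  have ae: "AE x in NN. dderiv TS T (\<lambda>t. s * v t) x = s * dderiv TS T v x"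
    using AE_NN[OF H10_lin(2)[OF v v, of s 0]] unfolding fe[symmetric]
    by eventually_elim simp
  have [measurable]: "dderiv TS T (\<lambda>t. s * v t) \<in> borel_measurable NN" "dderiv TS T v \<in> borel_measurable NN"
    using Dm sv v by auto
  have "delta_int TS 0 T (\<lambda>t. (dderiv TS T (\<lambda>t. s * v t) t)\<^sup>2) = integral\<^sup>L NN (\<lambda>t. s\<^sup>2 * (dderiv TS T v t)\<^sup>2)"
    unfolding delta_int_def
    by (rule integral_cong_AE) (use ae in \<open>auto simp: power_mult_distrib elim!: eventually_mono\<close>)
  also have "\<dots> = s\<^sup>2 * delta_int TS 0 T (\<lambda>t. (dderiv TS T v t)\<^sup>2)" by (simp add: delta_int_def)
  finally show "nrm (\<lambda>t. s * v t) = \<bar>s\<bar> * nrm v"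
    by (simp add: H_norm_def real_sqrt_mult)
qed

lemma remainder:
  assumes u: "u \<in> H10 TS T" and v: "v \<in> H10 TS T"
  shows "Ff v - Ff u - Lf u (\<lambda>t. v t - u t)
       = 1/2 * (nrm (\<lambda>t. v t - u t))\<^sup>2 + lam/2 * delta_int TS 0 T (\<lambda>t. ((\<lambda>t. v t - u t) (sig t))\<^sup>2)"
proof -
  define w where "w = (\<lambda>t. v t - u t)"
  have w: "w \<in> H10 TS T" unfolding w_def by (rule diff_H(1)[OF u v])
  have ae: "AE x in NN. dderiv TS T v x = dderiv TS T u x + dderiv TS T w x"
    unfolding w_def by (rule diff_H(2)[OF u v])
  have [measurable]: "dderiv TS T u \<in> borel_measurable NN" "dderiv TS T v \<in> borel_measurable NN"
    "dderiv TS T w \<in> borel_measurable NN" using Dm u v w by auto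
  have e1: "integral\<^sup>L NN (\<lambda>t. (dderiv TS T v t)\<^sup>2) = integral\<^sup>L NN (\<lambda>t. (dderiv TS T u t)\<^sup>2)
      + 2 * integral\<^sup>L NN (\<lambda>t. dderiv TS T u t * dderiv TS T w t) + integral\<^sup>L NN (\<lambda>t. (dderiv TS T w t)\<^sup>2)"
  proof -
    have "integral\<^sup>L NN (\<lambda>t. (dderiv TS T v t)\<^sup>2) = integral\<^sup>L NN (\<lambda>t. (dderiv TS T u t)\<^sup>2
      + 2 * (dderiv TS T u t * dderiv TS T w t) + (dderiv TS T w t)\<^sup>2)"
      by (rule integral_cong_AE) (use ae in \<open>auto simp: power2_eq_square algebra_simps elim!: eventually_mono\<close>)
    also have "\<dots> = integral\<^sup>L NN (\<lambda>t. (dderiv TS T u t)\<^sup>2)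
      + 2 * integral\<^sup>L NN (\<lambda>t. dderiv TS T u t * dderiv TS T w t) + integral\<^sup>L NN (\<lambda>t. (dderiv TS T w t)\<^sup>2)"
      using Dm(2)[OF u] Dm(2)[OF w] DD_int[OF u w] by simp
    finally show ?thesis .
  qed
  have sv: "\<And>t. v (sig t) = u (sig t) + w (sig t)" by (simp add: w_def)
  have e2: "integral\<^sup>L NN (\<lambda>t. (v (sig t))\<^sup>2) = integral\<^sup>L NN (\<lambda>t. (u (sig t))\<^sup>2)
      + 2 * integral\<^sup>L NN (\<lambda>t. u (sig t) * w (sig t)) + integral\<^sup>L NN (\<lambda>t. (w (sig t))\<^sup>2)"
  proof -
    have "integral\<^sup>L NN (\<lambda>t. (v (sig t))\<^sup>2) = integral\<^sup>L NN (\<lambda>t. (u (sig t))\<^sup>2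
      + 2 * (u (sig t) * w (sig t)) + (w (sig t))\<^sup>2)"
      unfolding sv by (simp add: power2_eq_square algebra_simps)
    also have "\<dots> = integral\<^sup>L NN (\<lambda>t. (u (sig t))\<^sup>2)
      + 2 * integral\<^sup>L NN (\<lambda>t. u (sig t) * w (sig t)) + integral\<^sup>L NN (\<lambda>t. (w (sig t))\<^sup>2)"
      using SS_sq_int[OF u] SS_sq_int[OF w] SS_int[OF u w] by simp
    finally show ?thesis .
  qed
  have e3: "integral\<^sup>L NN (\<lambda>t. h t * v (sig t)) = integral\<^sup>L NN (\<lambda>t. h t * u (sig t)) + integral\<^sup>L NN (\<lambda>t. h t * w (sig t))"
  proof -
    have "integral\<^sup>L NN (\<lambda>t. h t * v (sig t)) = integral\<^sup>L NN (\<lambda>t. h t * u (sig t) + h t * w (sig t))"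
      unfolding sv by (simp add: algebra_simps)
    also have "\<dots> = integral\<^sup>L NN (\<lambda>t. h t * u (sig t)) + integral\<^sup>L NN (\<lambda>t. h t * w (sig t))"
      using hS_int[OF hL2 u] hS_int[OF hL2 w] by simp
    finally show ?thesis .
  qed
  have e4: "(\<Sum>j=1..p. d j * v (tt j)) = (\<Sum>j=1..p. d j * u (tt j)) + (\<Sum>j=1..p. d j * w (tt j))"
    by (simp add: w_def sum.distrib[symmetric] algebra_simps)
  have e5: "(nrm w)\<^sup>2 = integral\<^sup>L NN (\<lambda>t. (dderiv TS T w t)\<^sup>2)" using nrm_sq(2)[of w] by (simp add: delta_int_def)
  have e6: "integral\<^sup>L NN (\<lambda>t. (v (sig t) - u (sig t))\<^sup>2) = integral\<^sup>L NN (\<lambda>t. (w (sig t))\<^sup>2)"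
    by (simp add: w_def)
  show ?thesis unfolding w_def[symmetric] Ff_def Lf_def delta_int_def e1 e2 e3 e4 e5
    using e6 by (simp add: algebra_simps)
qed

lemma frechet:
  assumes u: "u \<in> H10 TS T"
  shows "frechet_diff_at (H10 TS T) nrm Ff u (Lf u)"
  unfolding frechet_diff_at_def
proof (intro conjI)
  show "\<forall>v\<in>H10 TS T. \<forall>w\<in>H10 TS T. \<forall>a b. Lf u (\<lambda>t. a * v t + b * w t) = a * Lf u v + b * Lf u w"
    using Lf_lin[OF u] by blast
  show "\<exists>C. \<forall>v\<in>H10 TS T. \<bar>Lf u v\<bar> \<le> C * nrm v" by (rule Lf_bound[OF u])
  show "\<forall>\<epsilon>>0. \<exists>\<delta>>0. \<forall>v\<in>H10 TS T. nrm (\<lambda>t. v t - u t) < \<delta> \<longrightarrow>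
        \<bar>Ff v - Ff u - Lf u (\<lambda>t. v t - u t)\<bar> \<le> \<epsilon> * nrm (\<lambda>t. v t - u t)"
  proof (intro allI impI)
    fix \<epsilon> :: real assume ep: "0 < \<epsilon>"
    define B1 where "B1 = (1 + T) / 2"
    define K0 where "K0 = 1/2 + \<bar>lam\<bar> / 2 * (T * B1\<^sup>2)"
    have K0: "0 < K0" using Tpos by (simp add: K0_def add_pos_nonneg)
    show "\<exists>\<delta>>0. \<forall>v\<in>H10 TS T. nrm (\<lambda>t. v t - u t) < \<delta> \<longrightarrow>
        \<bar>Ff v - Ff u - Lf u (\<lambda>t. v t - u t)\<bar> \<le> \<epsilon> * nrm (\<lambda>t. v t - u t)"
    proof (intro exI[of _ "\<epsilon> / K0"] conjI ballI impI)
      show "0 < \<epsilon> / K0" using ep K0 by simp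
      fix v assume v: "v \<in> H10 TS T" and lt: "nrm (\<lambda>t. v t - u t) < \<epsilon> / K0"
      define w where "w = (\<lambda>t. v t - u t)"
      define n where "n = nrm w"
      have w: "w \<in> H10 TS T" unfolding w_def by (rule diff_H(1)[OF u v])
      have n0: "0 \<le> n" unfolding n_def by (rule nrm_sq(3))
      define I where "I = delta_int TS 0 T (\<lambda>t. (w (sig t))\<^sup>2)"
      have r: "Ff v - Ff u - Lf u w = 1/2 * n\<^sup>2 + lam/2 * I"
        using remainder[OF u v] unfolding w_def n_def I_def by simp
      have Ib: "\<bar>I\<bar> \<le> T * (B1 * n)\<^sup>2" unfolding I_def n_def B1_def by (rule sigsq_bound[OF w])
      have "\<bar>1/2 * n\<^sup>2 + lam/2 * I\<bar> \<le> 1/2 * n\<^sup>2 + \<bar>lam\<bar>/2 * \<bar>I\<bar>"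
        by (simp add: abs_mult abs_triangle_ineq[THEN order_trans])
      also have "\<dots> \<le> 1/2 * n\<^sup>2 + \<bar>lam\<bar>/2 * (T * (B1 * n)\<^sup>2)"
        using Ib by (simp add: mult_left_mono)
      also have "\<dots> = K0 * n * n" by (simp add: K0_def power2_eq_square algebra_simps)
      also have "\<dots> \<le> K0 * (\<epsilon> / K0) * n"
        using lt n0 K0 unfolding n_def w_def by (intro mult_right_mono mult_left_mono) auto
      also have "\<dots> = \<epsilon> * n" using K0 by simp
      finally show "\<bar>Ff v - Ff u - Lf u (\<lambda>t. v t - u t)\<bar> \<le> \<epsilon> * nrm (\<lambda>t. v t - u t)"
        using r unfolding n_def w_def by simp
    qed
  qed
qed

lemma critical:
  assumes u: "u \<in> H10 TS T" and cp: "critical_point (H10 TS T) nrm Ff u" and v: "v \<in> H10 TS T"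
  shows "Lf u v = 0"
proof -
  obtain L' where fr': "frechet_diff_at (H10 TS T) nrm Ff u L'" and z: "\<forall>v\<in>H10 TS T. L' v = 0"
    using cp by (auto simp: critical_point_def)
  have fr: "frechet_diff_at (H10 TS T) nrm Ff u (Lf u)" by (rule frechet[OF u])
  obtain C where C: "\<forall>v\<in>H10 TS T. \<bar>Lf u v\<bar> \<le> C * nrm v" using Lf_bound[OF u] by blast
  show ?thesis
  proof (cases "nrm v = 0")
    case True
    then show ?thesis using C v by force
  next
    case False
    then have nv: "0 < nrm v" using nrm_sq(3)[of v] by simp
    have key: "\<bar>Lf u v\<bar> \<le> 2 * \<epsilon> * nrm v" if ep: "0 < \<epsilon>" for \<epsilon>
    proof -
      obtain \<delta>1 where d1: "0 < \<delta>1" "\<forall>w\<in>H10 TS T. nrm (\<lambda>t. w t - u t) < \<delta>1 \<longrightarrow>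
          \<bar>Ff w - Ff u - Lf u (\<lambda>t. w t - u t)\<bar> \<le> \<epsilon> * nrm (\<lambda>t. w t - u t)"
        using fr ep unfolding frechet_diff_at_def by blast
      obtain \<delta>2 where d2: "0 < \<delta>2" "\<forall>w\<in>H10 TS T. nrm (\<lambda>t. w t - u t) < \<delta>2 \<longrightarrow>
          \<bar>Ff w - Ff u - L' (\<lambda>t. w t - u t)\<bar> \<le> \<epsilon> * nrm (\<lambda>t. w t - u t)"
        using fr' ep unfolding frechet_diff_at_def by blast
      define s where "s = min \<delta>1 \<delta>2 / (2 * nrm v)"
      have s: "0 < s" using d1 d2 nv by (simp add: s_def)
      define z where "z = (\<lambda>t. 1 * u t + s * v t)"
      have zH: "z \<in> H10 TS T" unfolding z_def by (rule H10_lin(1)[OF u v])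
      have zd: "(\<lambda>t. z t - u t) = (\<lambda>t. s * v t)" by (simp add: z_def)
      have sH: "(\<lambda>t. s * v t) \<in> H10 TS T" by (rule scale_H(1)[OF v])
      have ns: "nrm (\<lambda>t. s * v t) = s * nrm v" using scale_H(2)[OF v, of s] s by simp
      have "s * nrm v = min \<delta>1 \<delta>2 / 2" using nv by (simp add: s_def)
      then have lt1: "s * nrm v < \<delta>1" and lt2: "s * nrm v < \<delta>2" using d1 d2 by linarith+
      have "nrm (\<lambda>t. z t - u t) < \<delta>1 \<longrightarrow> \<bar>Ff z - Ff u - Lf u (\<lambda>t. z t - u t)\<bar> \<le> \<epsilon> * nrm (\<lambda>t. z t - u t)"
        using d1(2) zH by blast
      then have b1: "\<bar>Ff z - Ff u - Lf u (\<lambda>t. s * v t)\<bar> \<le> \<epsilon> * (s * nrm v)"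
        unfolding zd ns using lt1 by blast
      have "nrm (\<lambda>t. z t - u t) < \<delta>2 \<longrightarrow> \<bar>Ff z - Ff u - L' (\<lambda>t. z t - u t)\<bar> \<le> \<epsilon> * nrm (\<lambda>t. z t - u t)"
        using d2(2) zH by blast
      then have b2: "\<bar>Ff z - Ff u - L' (\<lambda>t. s * v t)\<bar> \<le> \<epsilon> * (s * nrm v)"
        unfolding zd ns using lt2 by blast
      have L0: "L' (\<lambda>t. s * v t) = 0" using z sH by blast
      have "Lf u (\<lambda>t. s * v t) = Lf u (\<lambda>t. s * v t + 0 * v t)" by simp
      also have "\<dots> = s * Lf u v" using Lf_lin[OF u v v, of s 0] by simp
      finally have Ls: "Lf u (\<lambda>t. s * v t) = s * Lf u v" .
      have "\<bar>s * Lf u v\<bar> \<le> 2 * \<epsilon> * (s * nrm v)" using b1 b2 L0 Ls by linarith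
      then have "s * \<bar>Lf u v\<bar> \<le> s * (2 * \<epsilon> * nrm v)" using s by (simp add: abs_mult mult_ac)
      then show ?thesis using s by simp
    qed
    show ?thesis
    proof (rule ccontr)
      assume ne: "Lf u v \<noteq> 0"
      define \<epsilon> where "\<epsilon> = \<bar>Lf u v\<bar> / (4 * nrm v)"
      have ep: "0 < \<epsilon>" using ne nv by (simp add: \<epsilon>_def)
      have "2 * \<epsilon> * nrm v = \<bar>Lf u v\<bar> / 2" using nv by (simp add: \<epsilon>_def)
      then show False using key[OF ep] ne by simp
    qed
  qed
qed

end

theorem mainTheorem3:
  fixes TS :: "real set" and T lam :: real and h :: "real \<Rightarrow> real"
    and p :: nat and tt d :: "nat \<Rightarrow> real"
    and \<phi> :: "(real \<Rightarrow> real) \<Rightarrow> real"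
  assumes "time_scale TS" and "T > 0" and "0 \<in> TS" and "T \<in> TS"
    and "\<forall>j\<in>{1..p}. right_dense TS (tt j) \<and> 0 < tt j \<and> tt j < T"
    and "\<forall>i\<in>{1..p}. \<forall>j\<in>{1..p}. i < j \<longrightarrow> tt i < tt j"
    and "L2_delta TS 0 T h"
    and phi_def: "\<forall>v. \<phi> v =
        1/2 * delta_int TS 0 T (\<lambda>t. (dderiv TS T v t)\<^sup>2)
        + lam/2 * delta_int TS 0 T (\<lambda>t. (v (sigma_ts TS t))\<^sup>2)
        - delta_int TS 0 T (\<lambda>t. h t * v (sigma_ts TS t))
        + (\<Sum>j=1..p. d j * v (tt j))"
  shows "(\<forall>u\<in>H10 TS T. frechet_diff_at (H10 TS T) (H_norm TS T) \<phi> u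
            (\<lambda>v. delta_int TS 0 T (\<lambda>t. dderiv TS T u t * dderiv TS T v t)
                + lam * delta_int TS 0 T (\<lambda>t. u (sigma_ts TS t) * v (sigma_ts TS t))
                - delta_int TS 0 T (\<lambda>t. h t * v (sigma_ts TS t))
                + (\<Sum>j=1..p. d j * v (tt j))))
       \<and> (\<forall>u\<in>H10 TS T. critical_point (H10 TS T) (H_norm TS T) \<phi> u
            \<longrightarrow> weak_solution TS T lam h p tt d u)"
proof -
  interpret tss2 TS T lam h p tt d
    using assms by unfold_locales (auto simp: time_scale_def)
  have F: "\<phi> = Ff" by (rule ext) (simp add: phi_def Ff_def)
  have Lr: "(\<lambda>v. delta_int TS 0 T (\<lambda>t. dderiv TS T u t * dderiv TS T v t)
                + lam * delta_int TS 0 T (\<lambda>t. u (sigma_ts TS t) * v (sigma_ts TS t))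
                - delta_int TS 0 T (\<lambda>t. h t * v (sigma_ts TS t))
                + (\<Sum>j=1..p. d j * v (tt j))) = Lf u" for u
    by (rule ext) (simp add: Lf_def)
  show ?thesis
  proof (intro conjI ballI impI)
    fix u assume u: "u \<in> H10 TS T"
    show "frechet_diff_at (H10 TS T) (H_norm TS T) \<phi> u
            (\<lambda>v. delta_int TS 0 T (\<lambda>t. dderiv TS T u t * dderiv TS T v t)
                + lam * delta_int TS 0 T (\<lambda>t. u (sigma_ts TS t) * v (sigma_ts TS t))
                - delta_int TS 0 T (\<lambda>t. h t * v (sigma_ts TS t))
                + (\<Sum>j=1..p. d j * v (tt j)))"
      unfolding F Lr by (rule frechet[OF u])
  next
    fix u assume u: "u \<in> H10 TS T" and cp: "critical_point (H10 TS T) (H_norm TS T) \<phi> u"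
    have "Lf u v = 0" if v: "v \<in> H10 TS T" for v
      using critical[OF u _ v] cp unfolding F by simp
    then show "weak_solution TS T lam h p tt d u"
      unfolding weak_solution_def Lf_def using u by (auto simp: algebra_simps)
  qed
qed

end
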